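(* Let $H$ be a graph such that $L(H)$ has a $K_t$-minor. Then for every integer $m\geq 2$, $L(mH)$ has a $K_{mt}$-minor.
   Context: Graphs are finite and may have parallel edges but no loops. $L(H)$ is the simple graph with vertex set $E(H)$ in which two distinct edges of $H$ are adjacent iff they share at least one endpoint. For $m\geq 2$, $mH$ denotes the graph obtained from $H$ by replacing each edge $e$ by $m$ parallel copies of $e$. A graph has a $K_t$-minor if $K_t$ can be obtained from a subgraph of it by contracting edges. *)

theory Defs
  imports Main
begin

text \<open>A finite multigraph without loops: vertex set V, edge set E (edges are abstract
  objects, so parallel edges are allowed), and an endpoint map assigning to each edge
  a set of exactly two distinct vertices.\<close>
definition multigraph :: "'v set \<Rightarrow> 'e set \<Rightarrow> ('e \<Rightarrow> 'v set) \<Rightarrow> bool" where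
  "multigraph V E ends \<longleftrightarrow> finite V \<and> finite E \<and>
     (\<forall>e\<in>E. ends e \<subseteq> V \<and> card (ends e) = 2)"

text \<open>mH: each edge e is replaced by m parallel copies (e,0),...,(e,m-1).\<close>
definition mult_edges :: "nat \<Rightarrow> 'e set \<Rightarrow> ('e \<times> nat) set" where
  "mult_edges m E = E \<times> {0..<m}"

definition mult_ends :: "('e \<Rightarrow> 'v set) \<Rightarrow> ('e \<times> nat) \<Rightarrow> 'v set" where
  "mult_ends ends = (\<lambda>(e, i). ends e)"

definition line_adj :: "'e set \<Rightarrow> ('e \<Rightarrow> 'v set) \<Rightarrow> 'e \<Rightarrow> 'e \<Rightarrow> bool" where
  "line_adj E ends e f \<longleftrightarrow> e \<in> E \<and> f \<in> E \<and> e \<noteq> f \<and> ends e \<inter> ends f \<noteq> {}"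

definition connected_in :: "('a \<Rightarrow> 'a \<Rightarrow> bool) \<Rightarrow> 'a set \<Rightarrow> bool" where
  "connected_in adj B \<longleftrightarrow>
     (\<forall>x\<in>B. \<forall>y\<in>B. (\<lambda>a b. a \<in> B \<and> b \<in> B \<and> adj a b)\<^sup>*\<^sup>* x y)"

definition has_K_minor :: "'a set \<Rightarrow> ('a \<Rightarrow> 'a \<Rightarrow> bool) \<Rightarrow> nat \<Rightarrow> bool" where
  "has_K_minor V adj t \<longleftrightarrow>
     (\<exists>B :: nat \<Rightarrow> 'a set.
        (\<forall>i<t. B i \<noteq> {} \<and> B i \<subseteq> V \<and> connected_in adj (B i)) \<and>
        (\<forall>i<t. \<forall>j<t. i \<noteq> j \<longrightarrow> B i \<inter> B j = {}) \<and>
        (\<forall>i<t. \<forall>j<t. i \<noteq> j \<longrightarrow> (\<exists>x\<in>B i. \<exists>y\<in>B j. adj x y)))"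

end

theory Submission
  imports Defs
begin

lemma lift_conn:
  assumes "(\<lambda>a b. a \<in> B \<and> b \<in> B \<and> line_adj E ends a b)\<^sup>*\<^sup>* x y" "k < m"
  shows "(\<lambda>a b. a \<in> B \<times> {k} \<and> b \<in> B \<times> {k} \<and>
           line_adj (mult_edges m E) (mult_ends ends) a b)\<^sup>*\<^sup>* (x, k) (y, k)"
  using assms(1)
proof (induction rule: rtranclp_induct)
  case base then show ?case by simp
next
  case (step y z)
  have "(\<lambda>a b. a \<in> B \<times> {k} \<and> b \<in> B \<times> {k} \<and>
           line_adj (mult_edges m E) (mult_ends ends) a b) (y, k) (z, k)"
    using step(2) assms(2) by (auto simp: line_adj_def mult_edges_def mult_ends_def)
  then show ?case using step(3) by (rule rtranclp.rtrancl_into_rtrancl[rotated])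
qed

theorem mainTheorem12:
  fixes V :: "'v set" and E :: "'e set" and ends :: "'e \<Rightarrow> 'v set" and t m :: nat
  assumes "multigraph V E ends"
    and "has_K_minor E (line_adj E ends) t"
    and "m \<ge> 2"
  shows "has_K_minor (mult_edges m E) (line_adj (mult_edges m E) (mult_ends ends)) (m * t)"
proof -
  obtain B where B1: "\<forall>i<t. B i \<noteq> {} \<and> B i \<subseteq> E \<and> connected_in (line_adj E ends) (B i)"
    and B2: "\<forall>i<t. \<forall>j<t. i \<noteq> j \<longrightarrow> B i \<inter> B j = {}"
    and B3: "\<forall>i<t. \<forall>j<t. i \<noteq> j \<longrightarrow> (\<exists>x\<in>B i. \<exists>y\<in>B j. line_adj E ends x y)"
    using assms(2) unfolding has_K_minor_def by blast
  have m0: "m > 0" using assms(3) by simp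
  define C where "C n = B (n div m) \<times> {n mod m}" for n
  have dlt: "n div m < t" if "n < m * t" for n
    using that m0 by (simp add: div_less_iff_less_mult mult.commute)
  have ne: "ends e \<noteq> {}" if "e \<in> E" for e
    using assms(1) that unfolding multigraph_def by fastforce
  show ?thesis
    unfolding has_K_minor_def
  proof (intro exI[of _ C] conjI allI impI)
    fix i assume i: "i < m * t"
    have it: "i div m < t" using dlt i .
    show "C i \<noteq> {}" using B1 it by (auto simp: C_def)
    show "C i \<subseteq> mult_edges m E" using B1 it m0 by (auto simp: C_def mult_edges_def)
    show "connected_in (line_adj (mult_edges m E) (mult_ends ends)) (C i)"
      unfolding connected_in_def
    proof (intro ballI)
      fix x y assume "x \<in> C i" "y \<in> C i"
      then obtain a b where ab: "x = (a, i mod m)" "y = (b, i mod m)" "a \<in> B (i div m)" "b \<in> B (i div m)"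
        by (auto simp: C_def)
      have "(\<lambda>x y. x \<in> B (i div m) \<and> y \<in> B (i div m) \<and> line_adj E ends x y)\<^sup>*\<^sup>* a b"
        using B1 it ab unfolding connected_in_def by blast
      from lift_conn[OF this, of "i mod m" m] m0 show
        "(\<lambda>a b. a \<in> C i \<and> b \<in> C i \<and> line_adj (mult_edges m E) (mult_ends ends) a b)\<^sup>*\<^sup>* x y"
        by (simp add: ab C_def)
    qed
  next
    fix i j assume i: "i < m * t" and j: "j < m * t" and ij: "i \<noteq> j"
    have it: "i div m < t" using dlt i .
    have jt: "j div m < t" using dlt j .
    have dm: "i div m \<noteq> j div m \<or> i mod m \<noteq> j mod m"
      using ij by (metis div_mult_mod_eq)
    show "C i \<inter> C j = {}" using dm B2 it jt by (auto simp: C_def)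
    show "\<exists>x\<in>C i. \<exists>y\<in>C j. line_adj (mult_edges m E) (mult_ends ends) x y"
    proof (cases "i div m = j div m")
      case True
      then have md: "i mod m \<noteq> j mod m" using dm by simp
      obtain a where a: "a \<in> B (i div m)" using B1 it by blast
      have aE: "a \<in> E" using B1 it a by blast
      have "line_adj (mult_edges m E) (mult_ends ends) (a, i mod m) (a, j mod m)"
        using md aE ne[OF aE] m0 by (auto simp: line_adj_def mult_edges_def mult_ends_def)
      then show ?thesis using a True by (auto simp: C_def)
    next
      case False
      then obtain a b where ab: "a \<in> B (i div m)" "b \<in> B (j div m)" "line_adj E ends a b"
        using B3 it jt by blast
      have "line_adj (mult_edges m E) (mult_ends ends) (a, i mod m) (b, j mod m)"
        using ab m0 by (auto simp: line_adj_def mult_edges_def mult_ends_def)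
      then show ?thesis using ab by (auto simp: C_def)
    qed
  qed
qed

end
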